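(* Let $m\ge4$ be even, $h=\frac m2$, and $\bar A=\{1,2,\dots,2^{h-1}-1\}$. For any $i\in\bar A$ and $j\in\Gamma_{(h)}$, $C_{i+2^h}\cap C_{j+2^h}\neq\emptyset$ only if $i=j$ and $j\in\Gamma_{(h-1)}$.
   Context: Let $v=2^m-1$. For an integer $i$, $C_i=\{i\cdot 2^s \bmod v: s\ge 0\}$ is the $2$-cyclotomic coset of $i$ modulo $v$. For a positive integer $t$, $\Gamma_{(t)}=\{j:1\le j\le 2^t-1,\ j\text{ odd}\}$. *)

theory Defs
  imports Main
begin

definition cyc_coset :: "nat \<Rightarrow> nat \<Rightarrow> nat set" where
  "cyc_coset v i = {(i * 2 ^ s) mod v | s. True}"

definition Gamma :: "nat \<Rightarrow> nat set" where
  "Gamma t = {j. 1 \<le> j \<and> j \<le> 2 ^ t - 1 \<and> odd j}"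

end

theory Submission
  imports Defs
begin

lemma two_pow_mod:
  assumes "m \<ge> 2" shows "(2::nat)^(m*n) mod (2^m-1) = 1"
proof -
  have "(4::nat) \<le> 2^m" using assms
  proof -
    have "(2::nat)^2 \<le> 2^m" using assms by (intro power_increasing) auto
    then show ?thesis by simp
  qed
  then have m1: "(2::nat)^m mod (2^m-1) = 1"
  proof -
    define v :: nat where "v = 2^m - 1"
    have e: "2^m = v + 1" and v1: "v > 1" using \<open>4 \<le> 2^m\<close> by (simp_all add: v_def)
    have "(v+1) mod v = 1" using v1 by (metis add.commute mod_add_self2 mod_less)
    then show ?thesis using e by simp
  qed
  have "(2::nat)^(m*n) mod (2^m-1) = ((2^m mod (2^m-1))^n) mod (2^m-1)"
    by (simp add: power_mult power_mod)
  also have "\<dots> = 1" using m1 \<open>4 \<le> 2^m\<close> by simp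
  finally show ?thesis .
qed

lemma red:
  assumes "m \<ge> 2" shows "(x * 2^N) mod (2^m-1) = (x*2^(N mod m)) mod (2^m-1::nat)"
proof -
  have "x*2^N = x*2^(N mod m) * 2^(m*(N div m))"
    by (metis mod_mult_div_eq power_add mult.assoc mult.commute)
  then have "(x * 2^N) mod (2^m-1) = x*2^(N mod m) * (2^(m*(N div m)) mod (2^m-1)) mod (2^m-1)"
    by (metis mod_mult_right_eq)
  then show ?thesis using two_pow_mod[OF assms] by simp
qed

theorem lemma12:
  fixes m h i j :: nat
  assumes "m \<ge> 4" and "even m" and "h = m div 2"
    and "i \<in> {1 .. 2 ^ (h - 1) - 1}"
    and "j \<in> Gamma h"
    and "cyc_coset (2 ^ m - 1) (i + 2 ^ h) \<inter> cyc_coset (2 ^ m - 1) (j + 2 ^ h) \<noteq> {}"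
  shows "i = j \<and> j \<in> Gamma (h - 1)"
proof -
  define v :: nat where "v = 2^m - 1"
  define a :: nat where "a = i + 2^h"
  define b :: nat where "b = j + 2^h"
  define p :: nat where "p = 2^(h-1)"
  have m2: "m = 2*h" and h2: "h \<ge> 2" using assms(1-3) by auto
  have hp: "(2::nat)^h = 2*p"
  proof -
    have "h = Suc (h-1)" using h2 by simp
    then show ?thesis unfolding p_def by (metis power_Suc)
  qed
  have mp: "(2::nat)^m = 2^h * 2^h" unfolding m2 by (simp add: power_add[symmetric] mult_2)
  have p2: "p \<ge> 2" unfolding p_def using power_increasing[of 1 "h-1" "2::nat"] h2 by simp
  have iB: "1 \<le> i" "i + 1 \<le> p" using assms(4) p2 unfolding p_def by auto
  have jB: "1 \<le> j" "j + 1 \<le> 2*p" "odd j" using assms(5) hp unfolding Gamma_def by auto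
  have vB: "v = 4*p*p - 1" unfolding v_def mp hp by simp
  have m2': "m \<ge> 2" using assms(1) by simp
  have bodd: "odd b" unfolding b_def using jB h2 by simp
  have pp: "8*p \<le> 4*p*p" using mult_le_mono2[OF p2, of "4*p"] by simp
  have bv: "b < v" unfolding b_def vB hp using jB pp p2 by linarith
  obtain s t where st: "(a*2^s) mod v = (b*2^t) mod v"
    using assms(6) unfolding cyc_coset_def a_def b_def v_def by auto
  define N where "N = s + (m*t - t)"
  have tle: "t \<le> m*t" using assms(1) by simp
  have "b = b mod v" using bv by simp
  also have "\<dots> = (b*2^(m*t)) mod v" unfolding v_def using red[OF m2', of b "m*t"] by simp
  also have "\<dots> = (b*2^t*2^(m*t-t)) mod v" using tle
    by (simp add: mult.assoc power_add[symmetric])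
  also have "\<dots> = ((b*2^t) mod v *2^(m*t-t)) mod v" by (simp add: mod_mult_left_eq)
  also have "\<dots> = ((a*2^s) mod v *2^(m*t-t)) mod v" using st by simp
  also have "\<dots> = (a*2^N) mod v" unfolding N_def by (simp add: mod_mult_left_eq mult.assoc power_add)
  also have "\<dots> = (a*2^(N mod m)) mod v" unfolding v_def by (rule red[OF m2'])
  finally have br: "b = (a*2^(N mod m)) mod v" .
  define r where "r = N mod m"
  have rm: "r < m" unfolding r_def using assms(1) by simp
  have aB: "a + 1 \<le> 3*p" unfolding a_def hp using iB by simp
  show ?thesis
  proof (cases "r < h")
    case True
    have "a*2^r \<le> a*p" unfolding p_def using True by (intro mult_le_mono2 power_increasing) auto
    also have "\<dots> < v"
    proof -
      have "(a+1)*p \<le> 3*p*p" using mult_le_mono1[OF aB, of p] by simp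
      then have "a*p + p \<le> 3*p*p" by (simp add: algebra_simps)
      moreover have "3*p*p + 2 \<le> 4*p*p" using mult_le_mono[OF p2 p2] by simp
      ultimately show ?thesis unfolding vB using p2 by linarith
    qed
    finally have "b = a*2^r" using br r_def by simp
    then have "r = 0" using bodd by (cases r) auto
    then have "i = j" using \<open>b = a*2^r\<close> unfolding a_def b_def by simp
    then show ?thesis using iB jB unfolding Gamma_def p_def by auto
  next
    case False
    define k where "k = r - h"
    have rk: "r = h + k" and kh: "k < h" using False rm m2 unfolding k_def by auto
    define a' where "a' = a*2^k"
    have "a' \<le> a * p" unfolding a'_def p_def using kh by (intro mult_le_mono2 power_increasing) auto
    also have "\<dots> < 2^m"
    proof -
      have "(a+1)*p \<le> 3*p*p" using mult_le_mono1[OF aB, of p] by simp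
      then have "a*p + p \<le> 3*p*p" by (simp add: algebra_simps)
      moreover have "3*p*p + 2 \<le> 4*p*p" using mult_le_mono[OF p2 p2] by simp
      moreover have "(2::nat)^m = 4*p*p" unfolding mp hp by simp
      ultimately show ?thesis using p2 by linarith
    qed
    finally have a'm: "a' < 2^h * 2^h" using mp by simp
    define x where "x = a' div 2^h"
    define y where "y = a' mod 2^h"
    have xB: "x < 2^h" unfolding x_def using a'm by (simp add: div_less_iff_less_mult)
    have yB: "y < 2^h" unfolding y_def by simp
    have "a*2^r = a'*2^h" unfolding rk a'_def by (simp add: power_add mult_ac)
    also have "\<dots> = x*2^m + y*2^h" unfolding x_def y_def mp
      by (metis add_mult_distrib div_mult_mod_eq mult.assoc)
    finally have e1: "(a*2^r) mod v = (x*2^m + y*2^h) mod v" by simp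
    have "(x*2^m) mod v = x mod v" unfolding v_def using red[OF m2', of x m] by simp
    then have "(x*2^m + y*2^h) mod v = (x + y*2^h) mod v" by (metis mod_add_left_eq)
    with e1 br r_def have b2: "b = (x + y*2^h) mod v" by simp
    have xy: "x + y*2^h \<le> v"
    proof -
      have "(y+1)*2^h \<le> 2^h*2^h" using yB by (intro mult_le_mono1) simp
      then have "y*2^h + 2^h \<le> 2^h*2^h" by (simp add: algebra_simps)
      then show ?thesis unfolding v_def mp using xB by linarith
    qed
    have "x + y*2^h \<noteq> v"
    proof
      assume "x + y*2^h = v"
      then have "b = 0" using b2 by simp
      then show False using bodd by simp
    qed
    then have b3: "b = x + y*2^h" using xy b2 by simp
    have jh: "j < 2^h" using jB hp by simp
    have "b div 2^h = y" using b3 xB by simp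
    moreover have "b div 2^h = 1" unfolding b_def using jh by (simp add: div_add_self2)
    ultimately have y1: "y = 1" by simp
    have "b mod 2^h = x" using b3 xB by simp
    moreover have "b mod 2^h = j" unfolding b_def using jh by simp
    ultimately have xj: "x = j" by simp
    have "a' = 2^h * x + 1" using y1 unfolding x_def y_def by (metis div_mult_mod_eq mult.commute)
    then have "odd a'" using h2 by simp
    then have k0: "k = 0" unfolding a'_def by (cases k) auto
    then have "a' = a" unfolding a'_def by simp
    moreover have ih: "i < 2^h" using iB hp by simp
    have "a mod 2^h = i" unfolding a_def using ih by simp
    moreover have "a div 2^h = 1" unfolding a_def using ih by (simp add: div_add_self2)
    ultimately have "i = 1" "j = 1" using y1 xj unfolding x_def y_def by auto
    then show ?thesis using p2 unfolding Gamma_def p_def by simp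
  qed
qed

end
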